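(* Let $\bar R_m(\varepsilon)$ be defined by $\bar R_1(\varepsilon)=\varepsilon$ and, for $m\ge2$, $\big[(-1)^m(1+\varepsilon)^m+(1+\varepsilon)\big]\bar R_m(\varepsilon)=-(3+\varepsilon)\sum_{j=1}^{m-1}\bar R_j(\varepsilon)\bar R_{m-j}(\varepsilon)$. Write the expansions at $\varepsilon=0$ as $$\bar R_{2m+1}(\varepsilon)=\varepsilon^{m+1}\big(a_m+b_m\varepsilon+O(\varepsilon^2)\big)\ (m\ge0),\qquad \bar R_{2n}(\varepsilon)=\varepsilon^{n+1}\big(c_n+d_n\varepsilon+O(\varepsilon^2)\big)\ (n\ge1).$$ Then, for $|\tau|<1/3$, $$\sum_{m\ge0}b_m\tau^{2m+1}=-\frac{\tau\big(45\tau^2-33\log(1+9\tau^2)\big)}{24\,(1+9\tau^2)^{3/2}},\qquad \sum_{n\ge1}d_n\tau^{2n}=\frac{\tau^2\big(14+36\tau^2-33\log(1+9\tau^2)\big)}{8\,(1+9\tau^2)^2}.$$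
   Context: The $\bar R_m$ are the coefficient functions of the transseries solution of the static logistic map $y(n+1)=(3+\varepsilon)y(n)(1-y(n))$ about its fixed point $(2+\varepsilon)/(3+\varepsilon)$, normalised by $\bar R_1=\varepsilon$; each $\bar R_m$ is a rational function of $\varepsilon$ analytic at $0$ with the stated orders of vanishing. $\log$ denotes the real natural logarithm. *)

theory Defs
  imports "HOL-Analysis.Analysis" "HOL-Library.Landau_Symbols"
begin

text \<open>The coefficient functions of the transseries, as real rational functions of eps
  (evaluated pointwise; they are well defined for eps in a punctured neighbourhood of 0).\<close>
function Rbar :: "nat \<Rightarrow> real \<Rightarrow> real" where
  "Rbar 0 e = 0"
| "Rbar (Suc 0) e = e"
| "Rbar (Suc (Suc k)) e =
     - (3 + e) * (\<Sum>j\<in>{1..Suc k}. Rbar j e * Rbar (Suc (Suc k) - j) e)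
     / ((-1) ^ (Suc (Suc k)) * (1 + e) ^ (Suc (Suc k)) + (1 + e))"
  by pat_completeness auto
termination
  by (relation "Wellfounded.measure fst") auto

end

theory Submission
  imports Defs
begin

unbundle no vec_syntax
unbundle fps_syntax

definition Bin :: "real \<Rightarrow> real fps" where
  "Bin c = Abs_fps (\<lambda>n. (c gchoose n) * 9^n)"

abbreviation EE :: "real fps" where "EE \<equiv> 1 + 9 * fps_X"

lemma Bin_nth: "Bin c $ n = (c gchoose n) * 9^n" by (simp add: Bin_def)

lemma Bin_ode: "EE * fps_deriv (Bin c) = fps_const (9*c) * Bin c"
proof (rule fps_ext)
  fix n
  have k: "of_nat (Suc n) * (c gchoose Suc n) = (c - of_nat n) * (c gchoose n)"
    using gbinomial_absorption[of n c] gbinomial_absorb_comp[of c n] by simp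
  show "(EE * fps_deriv (Bin c)) $ n = (fps_const (9*c) * Bin c) $ n"
  proof (cases n)
    case 0 then show ?thesis by (simp add: Bin_nth fps_mult_nth fps_numeral_nth)
  next
    case (Suc m)
    have "(EE * fps_deriv (Bin c)) $ n = (of_nat (Suc n) * (c gchoose Suc n)) * 9^(Suc n) + 9 * (of_nat n * (c gchoose n) * 9^n)"
      using Suc by (simp add: Bin_nth algebra_simps fps_numeral_fps_const)
    also have "\<dots> = 9*c * ((c gchoose n) * 9^n)" unfolding k by (simp add: algebra_simps)
    finally show ?thesis by (simp add: Bin_nth)
  qed
qed

lemma lin0:
  fixes G :: "real fps"
  assumes "EE * fps_deriv G = fps_const r * G" "G $ 0 = 0"
  shows "G = 0"
proof -
  have "G $ n = 0" for n
  proof (induction n)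
    case 0 then show ?case using assms(2) .
  next
    case (Suc n)
    have e: "EE * fps_deriv G = fps_deriv G + fps_const 9 * (fps_X * fps_deriv G)"
      by (simp add: algebra_simps fps_numeral_fps_const)
    have c1: "(fps_X * fps_deriv G) $ n = (if n = 0 then 0 else of_nat n * G$n)" by (cases n) simp_all
    have "(EE * fps_deriv G) $ n = (fps_const r * G) $ n" using assms(1) by simp
    then have "of_nat (Suc n) * G $ Suc n + 9 * (if n = 0 then 0 else of_nat n * G $ n) = r * G $ n"
      unfolding e by (simp only: fps_add_nth fps_mult_left_const_nth c1 fps_deriv_nth) simp
    with Suc show ?case by (simp split: if_splits)
  qed
  then show ?thesis by (simp add: fps_eq_iff)
qed

lemma lin:
  fixes G H :: "real fps"
  assumes "numeral k * fps_deriv G = H * G" "G $ 0 = 0"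
  shows "G = 0"
proof -
  have "\<forall>j\<le>n. G $ j = 0" for n
  proof (induction n)
    case 0 then show ?case using assms(2) by simp
  next
    case (Suc n)
    have "(numeral k * fps_deriv G) $ n = (H * G) $ n" using assms(1) by simp
    moreover have "(H * G) $ n = 0" using Suc by (auto simp: fps_mult_nth intro!: sum.neutral)
    ultimately have "numeral k * (of_nat (Suc n) * G $ Suc n) = 0"
      by (simp add: fps_numeral_fps_const)
    then have "G $ Suc n = 0" by simp
    with Suc show ?case using le_Suc_eq by auto
  qed
  then have "G $ n = 0" for n by blast
  then show ?thesis by (simp add: fps_eq_iff)
qed

lemma Bin_unique:
  assumes "EE * fps_deriv F = fps_const (9*c) * F" "F $ 0 = 1"
  shows "F = Bin c"
proof -
  have "EE * fps_deriv (F - Bin c) = fps_const (9*c) * (F - Bin c)"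
    using assms(1) Bin_ode[of c] by (simp add: algebra_simps)
  moreover have "(F - Bin c) $ 0 = 0" using assms(2) by (simp add: Bin_nth)
  ultimately show ?thesis using lin0 by fastforce
qed

lemma Bin_mult: "Bin c * Bin d = Bin (c + d)"
proof (rule Bin_unique)
  show "EE * fps_deriv (Bin c * Bin d) = fps_const (9 * (c + d)) * (Bin c * Bin d)"
  proof -
    have "EE * fps_deriv (Bin c * Bin d) = Bin c * (EE * fps_deriv (Bin d)) + (EE * fps_deriv (Bin c)) * Bin d"
      by (simp add: algebra_simps)
    also have "\<dots> = fps_const (9 * (c + d)) * (Bin c * Bin d)"
      unfolding Bin_ode by (simp add: algebra_simps flip: fps_const_mult fps_const_add)
    finally show ?thesis .
  qed
qed (simp add: Bin_nth fps_mult_nth)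

lemma Bin_0: "Bin 0 = 1"
  by (rule fps_ext) (simp add: Bin_nth gbinomial_0_left)

lemma Bin_1: "Bin 1 = EE"
proof (rule fps_ext)
  fix n show "Bin 1 $ n = EE $ n"
  proof (cases n)
    case (Suc m) then show ?thesis
      by (cases m) (auto simp: Bin_nth fps_numeral_fps_const gbinomial_Suc)
  qed (simp add: Bin_nth)
qed

definition Q :: "real fps" where "Q = Bin (-1/2)"

lemma Q2: "Q^2 = Bin (-1)"
proof -
  have "Q^2 = Bin (-1/2 + -1/2)" by (simp only: Q_def power2_eq_square Bin_mult)
  also have "(-1/2 + -1/2::real) = -1" by simp
  finally show ?thesis .
qed

lemma EQ2: "EE * Q^2 = 1"
proof -
  have "EE * Q^2 = Bin 1 * Bin (-1)" by (simp only: Q2 Bin_1)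
  also have "\<dots> = 1" by (simp add: Bin_mult Bin_0)
  finally show ?thesis .
qed

lemma Qd: "2 * fps_deriv Q = -9 * Q^3"
proof -
  have "2 * fps_deriv Q = 2 * fps_deriv Q * (EE * Q^2)" by (simp only: EQ2 mult_1_right)
  also have "\<dots> = 2 * (EE * fps_deriv Q) * Q^2" by (simp add: algebra_simps)
  also have "\<dots> = 2 * fps_const (-9/2) * Q^3" by (simp add: Q_def Bin_ode power_numeral_reduce)
  also have "2 * fps_const (-9/2) = (-9 :: real fps)" by (simp add: fps_numeral_fps_const)
  finally show ?thesis .
qed

definition LL :: "real fps" where
  "LL = Abs_fps (\<lambda>n. if n = 0 then 0 else (-1)^(n+1) * 9^n / real n)"

lemma LLd: "fps_deriv LL = 9 * Q^2"
proof -
  note Q2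
  moreover have "fps_deriv LL = 9 * Bin (-1)"
    by (rule fps_ext) (simp add: LL_def Bin_nth fps_numeral_fps_const gbinomial_minus flip: binomial_gbinomial)
  ultimately show ?thesis by simp
qed

lemma fps_solve:
  fixes \<alpha> \<beta> \<gamma> \<delta> :: "real fps"
  assumes a0: "\<alpha>$0 = 1" and b0: "\<beta>$0 = 0"
  and F1: "fps_X * fps_deriv \<alpha> = 3 * \<alpha> * \<gamma>"
  and F2: "2 * fps_X * fps_deriv \<beta> = 6*(\<alpha>*\<delta> + \<beta>*\<gamma>) - 6*fps_X*fps_deriv(\<alpha>*\<gamma>) - \<alpha>*\<gamma>"
  and F3: "2*\<gamma> = -3*fps_X*\<alpha>^2"
  and F4: "2*\<delta> = -6*fps_X*\<alpha>*\<beta> - 3*\<gamma>^2 - fps_X*\<alpha>^2 - 2*fps_X*fps_deriv \<gamma> - \<gamma>"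
  shows "8*\<beta> = Q^3 * (11*LL - 15*fps_X)" and "8*\<delta> = fps_X*(14 + 36*fps_X - 33*LL)*Q^4"
proof -
  have X0: "fps_X \<noteq> (0::real fps)" by simp
  have "fps_X * (2*fps_deriv \<alpha>) = fps_X * (-9*\<alpha>^3)"
    using F1 F3 by algebra
  then have A1: "2*fps_deriv \<alpha> = -9*\<alpha>^3" using X0 mult_left_cancel by blast
  have "2 * fps_deriv (\<alpha> - Q) = (-9*(\<alpha>^2+\<alpha>*Q+Q^2)) * (\<alpha> - Q)"
    using A1 Qd by (simp add: algebra_simps power3_eq_cube power2_eq_square)
  moreover have "(\<alpha> - Q)$0 = 0" using a0 by (simp add: Q_def Bin_nth)
  ultimately have "\<alpha> - Q = 0" by (rule lin)
  then have aQ: "\<alpha> = Q" by simp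
  define Y where "Y = 11*LL - 15*fps_X"
  have Yd: "fps_deriv Y = 99*Q^2 - 15" by (simp add: Y_def LLd)
  define \<Delta> where "\<Delta> = 8*\<beta> - Q^3*Y"
  have g1: "2*\<gamma> = -3*fps_X*Q^2" using F3 aQ by simp
  have g2: "2*fps_deriv \<gamma> = -3*(Q^2 + fps_X*Q*(2*fps_deriv Q))"
  proof -
    have "fps_deriv (2*\<gamma>) = fps_deriv (-3*fps_X*Q^2)" using g1 by simp
    then show ?thesis by (simp add: algebra_simps power2_eq_square)
  qed
  have F2': "2 * fps_X * fps_deriv \<beta> = 6*(Q*\<delta> + \<beta>*\<gamma>) - 6*fps_X*(Q*fps_deriv \<gamma> + fps_deriv Q*\<gamma>) - Q*\<gamma>"
    using F2 aQ by (simp add: algebra_simps)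
  have F4': "2*\<delta> = -6*fps_X*Q*\<beta> - 3*\<gamma>^2 - fps_X*Q^2 - 2*fps_X*fps_deriv \<gamma> - \<gamma>"
    using F4 aQ by simp
  have Dd: "fps_deriv \<Delta> = 8*fps_deriv \<beta> - (3*Q^2*fps_deriv Q*Y + Q^3*(99*Q^2 - 15))"
    unfolding \<Delta>_def by (simp add: Yd fps_deriv_power' algebra_simps)
  have "fps_X * (2*(8*fps_deriv \<beta> - (3*Q^2*fps_deriv Q*Y + Q^3*(99*Q^2 - 15)))) = fps_X * (-27*Q^2*(8*\<beta> - Q^3*Y))"
    using g1 g2 F2' F4' Qd EQ2 by algebra
  then have "fps_X * (2*fps_deriv \<Delta>) = fps_X * (-27*Q^2*\<Delta>)"
    unfolding Dd by (simp only: \<Delta>_def)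
  then have "2*fps_deriv \<Delta> = (-27*Q^2)*\<Delta>" using X0 mult_left_cancel by blast
  moreover have "\<Delta>$0 = 0" unfolding \<Delta>_def Y_def using b0 by (simp add: LL_def fps_mult_nth)
  ultimately have "\<Delta> = 0" by (rule lin)
  then show b8: "8*\<beta> = Q^3 * (11*LL - 15*fps_X)" unfolding \<Delta>_def Y_def by simp
  have "2*(8*\<delta>) = 2*(fps_X*(14 + 36*fps_X - 33*LL)*Q^4)"
    using b8 g1 g2 F4' Qd EQ2 by algebra
  moreover have "(2::real fps) \<noteq> 0" by simp
  ultimately show "8*\<delta> = fps_X*(14 + 36*fps_X - 33*LL)*Q^4" using mult_left_cancel by blast
qed

lemma radius_Q: "fps_conv_radius Q \<ge> ereal (1/9)"
proof -
  have "fps_conv_radius Q = conv_radius (\<lambda>n. ((-1/2::real) gchoose n) * 9^n)"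
    by (simp add: Q_def Bin_def fps_conv_radius_def)
  also have "\<dots> = conv_radius (\<lambda>n. ((-1/2::real) gchoose n)) / ereal 9"
    by (subst conv_radius_mult_power_right) simp_all
  finally show ?thesis by (simp add: conv_radius_gchoose one_ereal_def)
qed

lemma radius_LL: "fps_conv_radius LL \<ge> ereal (1/9)"
proof -
  have "fps_conv_radius LL = conv_radius (\<lambda>n. fps_ln (1::real) $ n * 9^n)"
    unfolding fps_conv_radius_def LL_def
    by (rule conv_radius_cong_weak) (auto simp: fps_ln_nth gr0_conv_Suc)
  also have "\<dots> = fps_conv_radius (fps_ln (1::real)) / ereal 9"
    unfolding fps_conv_radius_def by (subst conv_radius_mult_power_right) simp_all
  finally show ?thesis by (simp add: one_ereal_def)
qed

lemma eval_Q: assumes "\<bar>u\<bar> < 1/9" shows "eval_fps Q u = (1+9*u) powr (-1/2)"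
proof -
  have "\<bar>9*u\<bar> < 1" using assms by simp
  from gen_binomial_real[OF this, of "-1/2"]
  have "(\<lambda>n. Q $ n * u^n) sums (1+9*u) powr (-1/2)"
    by (simp add: Q_def Bin_nth power_mult_distrib mult.assoc)
  then show ?thesis by (simp add: eval_fps_def sums_iff)
qed

lemma eval_LL: assumes "\<bar>u\<bar> < 1/9" shows "eval_fps LL u = ln (1+9*u)"
proof -
  have "ereal (norm u) < ereal (1/9)" using assms by simp
  then have r: "norm u < fps_conv_radius LL" using radius_LL by (rule less_le_trans)
  have sm: "summable (\<lambda>n. LL $ n * u^n)" using summable_fps[OF r] .
  have "ln (1+9*u) = (\<Sum>n. (-1)^n * (1 / real (n+1)) * ((1+9*u) - 1)^(Suc n))"
    using assms by (intro ln_series) auto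
  also have "\<dots> = (\<Sum>n. LL $ Suc n * u^(Suc n))"
    by (rule suminf_cong) (simp add: LL_def power_mult_distrib field_simps)
  also have "\<dots> = eval_fps LL u"
    using suminf_split_head[OF sm] by (simp add: eval_fps_def LL_def)
  finally show ?thesis ..
qed

lemma rad_lt: "\<bar>u::real\<bar> < 1/9 \<Longrightarrow> ereal (1/9) \<le> r \<Longrightarrow> ereal (norm u) < r"
  by (rule less_le_trans[of _ "ereal (1/9)"]) simp_all

lemma final_sums:
  fixes a b c d :: "nat \<Rightarrow> real" and \<tau> :: real
  defines "\<alpha> \<equiv> Abs_fps a" and "\<beta> \<equiv> Abs_fps b"
    and "\<gamma> \<equiv> Abs_fps (\<lambda>n. if n = 0 then 0 else c n)"
    and "\<delta> \<equiv> Abs_fps (\<lambda>n. if n = 0 then 0 else d n)"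
  assumes a0: "a 0 = 1" and b0: "b 0 = 0"
  and F1: "fps_X * fps_deriv \<alpha> = 3 * \<alpha> * \<gamma>"
  and F2: "2 * fps_X * fps_deriv \<beta> = 6*(\<alpha>*\<delta> + \<beta>*\<gamma>) - 6*fps_X*fps_deriv(\<alpha>*\<gamma>) - \<alpha>*\<gamma>"
  and F3: "2*\<gamma> = -3*fps_X*\<alpha>^2"
  and F4: "2*\<delta> = -6*fps_X*\<alpha>*\<beta> - 3*\<gamma>^2 - fps_X*\<alpha>^2 - 2*fps_X*fps_deriv \<gamma> - \<gamma>"
  and tau: "\<bar>\<tau>\<bar> < 1/3"
  shows "(\<lambda>m. b m * \<tau>^(2*m+1)) sums
           (- (\<tau> * (45 * \<tau>^2 - 33 * ln (1 + 9 * \<tau>^2))) / (24 * (1 + 9 * \<tau>^2) powr (3/2)))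
       \<and> (\<lambda>n. d (Suc n) * \<tau>^(2 * Suc n)) sums
           (\<tau>^2 * (14 + 36 * \<tau>^2 - 33 * ln (1 + 9 * \<tau>^2)) / (8 * (1 + 9 * \<tau>^2)^2))"
proof -
  note S = fps_solve[of \<alpha> \<beta> \<gamma> \<delta>, OF _ _ F1 F2 F3 F4]
  have B8: "8*\<beta> = Q^3 * (11*LL - 15*fps_X)" using S a0 b0 by (simp_all add: \<alpha>_def \<beta>_def)
  have D8: "8*\<delta> = fps_X*(14 + 36*fps_X - 33*LL)*Q^4" using S a0 b0 by (simp_all add: \<alpha>_def \<beta>_def)
  define u where "u = \<tau>^2"
  have u: "\<bar>u\<bar> < 1/9"
  proof -
    have "\<bar>\<tau>\<bar>^2 < (1/3)^2" using tau by (intro power_strict_mono) auto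
    then show ?thesis by (simp add: u_def power2_eq_square)
  qed
  have u0: "1 + 9*u > 0" using u by simp
  have rQ: "ereal (norm u) < fps_conv_radius Q" using rad_lt[OF u radius_Q] .
  have rL: "ereal (norm u) < fps_conv_radius LL" using rad_lt[OF u radius_LL] .
  have rX: "ereal (norm u) < fps_conv_radius (fps_X :: real fps)" by simp
  have rN: "ereal (norm u) < fps_conv_radius (numeral k :: real fps)" for k by simp
  have rQn: "ereal (norm u) < fps_conv_radius (Q^n)" for n
    using rQ fps_conv_radius_power[of Q n] by (rule less_le_trans)
  have rmult: "ereal (norm u) < fps_conv_radius (f*g)" if "ereal (norm u) < fps_conv_radius f" "ereal (norm u) < fps_conv_radius g" for f g :: "real fps"
    using fps_conv_radius_mult[of f g] that by (meson less_le_trans min_less_iff_conj)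
  have radd: "ereal (norm u) < fps_conv_radius (f+g)" if "ereal (norm u) < fps_conv_radius f" "ereal (norm u) < fps_conv_radius g" for f g :: "real fps"
    using fps_conv_radius_add[of f g] that by (meson less_le_trans min_less_iff_conj)
  have rdiff: "ereal (norm u) < fps_conv_radius (f-g)" if "ereal (norm u) < fps_conv_radius f" "ereal (norm u) < fps_conv_radius g" for f g :: "real fps"
    using fps_conv_radius_diff[of f g] that by (meson less_le_trans min_less_iff_conj)
  define W where "W = Q^3 * (11*LL - 15*fps_X)"
  define V where "V = fps_X*(14 + 36*fps_X - 33*LL)*Q^4"
  have rW: "ereal (norm u) < fps_conv_radius W"
    unfolding W_def by (intro rmult rdiff rQn rN rL rX radd)
  have rV: "ereal (norm u) < fps_conv_radius V"
    unfolding V_def by (intro rmult rdiff rQn rN rL rX radd)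
  have eQ: "eval_fps Q u = (1+9*u) powr (-1/2)" using eval_Q[OF u] .
  have eL: "eval_fps LL u = ln (1+9*u)" using eval_LL[OF u] .
  have eW: "eval_fps W u = ((1+9*u) powr (-1/2))^3 * (11 * ln (1+9*u) - 15*u)"
    unfolding W_def
    by (subst eval_fps_mult, (intro rmult rdiff rQn rN rL rX radd)+,
        subst eval_fps_diff, (intro rmult rdiff rQn rN rL rX radd)+,
        subst eval_fps_mult, (intro rmult rdiff rQn rN rL rX radd)+,
        subst eval_fps_mult, (intro rmult rdiff rQn rN rL rX radd)+,
        simp add: eval_fps_power[OF rQ] eQ eL)
  have eV: "eval_fps V u = u * (14 + 36*u - 33 * ln (1+9*u)) * ((1+9*u) powr (-1/2))^4"
    unfolding V_def
    by (subst eval_fps_mult, (intro rmult rdiff rQn rN rL rX radd)+,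
        subst eval_fps_mult, (intro rmult rdiff rQn rN rL rX radd)+,
        subst eval_fps_diff, (intro rmult rdiff rQn rN rL rX radd)+,
        subst eval_fps_add, (intro rmult rdiff rQn rN rL rX radd)+,
        subst eval_fps_mult, (intro rmult rdiff rQn rN rL rX radd)+,
        subst eval_fps_mult, (intro rmult rdiff rQn rN rL rX radd)+,
        simp add: eval_fps_power[OF rQ] eQ eL)
  have Wn: "W $ n = 8 * b n" for n
    using arg_cong[OF B8, of "\<lambda>f. f $ n"] by (simp add: W_def \<beta>_def fps_numeral_fps_const)
  have Vn: "V $ n = 8 * (if n = 0 then 0 else d n)" for n
    using arg_cong[OF D8, of "\<lambda>f. f $ n"] by (simp add: V_def \<delta>_def fps_numeral_fps_const)
  have p1: "((1+9*u) powr (-1/2))^3 = 1 / (1+9*u) powr (3/2)"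
  proof -
    have "((1+9*u) powr (-1/2))^3 = (1+9*u) powr (of_nat 3 * (-1/2))" using u0 by (intro powr_power) simp
    also have "of_nat 3 * (-1/2) = -(3/2::real)" by simp
    also have "(1+9*u) powr (-(3/2)) = 1/(1+9*u) powr (3/2)" by (rule powr_minus_divide)
    finally show ?thesis .
  qed
  have p2: "((1+9*u) powr (-1/2))^4 = 1 / (1+9*u)^2"
  proof -
    have "((1+9*u) powr (-1/2))^4 = (1+9*u) powr (- 2)" using u0 by (simp add: powr_power)
    also have "\<dots> = 1 / (1+9*u) powr 2" by (rule powr_minus_divide)
    also have "(1+9*u) powr 2 = (1+9*u)^2" using powr_realpow[OF u0, of 2] by simp
    finally show ?thesis .
  qed
  have sW: "(\<lambda>n. 8 * b n * u^n) sums eval_fps W u"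
    using sums_eval_fps[OF rW] by (simp add: Wn)
  have s1: "(\<lambda>n. \<tau> * ((8 * b n * u^n) / 8)) sums (\<tau> * (eval_fps W u / 8))"
    by (intro sums_mult sums_divide sW)
  have sV: "(\<lambda>n. 8 * (if n = 0 then 0 else d n) * u^n) sums eval_fps V u"
    using sums_eval_fps[OF rV] by (simp add: Vn)
  then have "(\<lambda>n. 8 * d (Suc n) * u^(Suc n)) sums eval_fps V u"
    using sums_Suc_iff[of "\<lambda>n. 8 * (if n = 0 then 0 else d n) * u^n" "eval_fps V u"] by simp
  then have s2: "(\<lambda>n. (8 * d (Suc n) * u^(Suc n)) / 8) sums (eval_fps V u / 8)"
    by (rule sums_divide)
  show ?thesis
  proof
    show "(\<lambda>m. b m * \<tau>^(2*m+1)) sums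
           (- (\<tau> * (45 * \<tau>^2 - 33 * ln (1 + 9 * \<tau>^2))) / (24 * (1 + 9 * \<tau>^2) powr (3/2)))"
    proof -
      have "(\<lambda>n. \<tau> * ((8 * b n * u^n) / 8)) = (\<lambda>m. b m * \<tau>^(2*m+1))"
        by (simp add: u_def power_mult[symmetric] algebra_simps)
      moreover have "\<tau> * (eval_fps W u / 8) = - (\<tau> * (45 * \<tau>^2 - 33 * ln (1 + 9 * \<tau>^2))) / (24 * (1 + 9 * \<tau>^2) powr (3/2))"
        unfolding eW p1 using u0 by (simp add: u_def field_simps)
      ultimately show ?thesis using s1 by (simp only:)
    qed
    show "(\<lambda>n. d (Suc n) * \<tau>^(2 * Suc n)) sums
           (\<tau>^2 * (14 + 36 * \<tau>^2 - 33 * ln (1 + 9 * \<tau>^2)) / (8 * (1 + 9 * \<tau>^2)^2))"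
    proof -
      have "(\<lambda>n. (8 * d (Suc n) * u^(Suc n)) / 8) = (\<lambda>n. d (Suc n) * \<tau>^(2 * Suc n))"
      proof (rule ext)
        fix n
        have "\<tau>^(2*Suc n) = u^Suc n" unfolding u_def by (rule power_mult)
        then show "(8 * d (Suc n) * u^(Suc n)) / 8 = d (Suc n) * \<tau>^(2 * Suc n)" by simp
      qed
      moreover have "eval_fps V u / 8 = \<tau>^2 * (14 + 36 * \<tau>^2 - 33 * ln (1 + 9 * \<tau>^2)) / (8 * (1 + 9 * \<tau>^2)^2)"
        unfolding eV p2 by (simp add: u_def)
      ultimately show ?thesis using s2 by (simp only:)
    qed
  qed
qed



definition P :: "(real \<Rightarrow> real) \<Rightarrow> real \<Rightarrow> real \<Rightarrow> bool" where
  "P f a b \<longleftrightarrow> ((\<lambda>e. (f e - a - b*e)/e) \<longlongrightarrow> 0) (at 0)"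

lemma ev_ne0: "eventually (\<lambda>e::real. e \<noteq> 0) (at 0)"
  by (simp add: eventually_at_filter)

lemma P_tendsto:
  assumes "P f a b" shows "(f \<longlongrightarrow> a) (at 0)"
proof -
  define h where "h = (\<lambda>e. (f e - a - b*e)/e)"
  have h: "(h \<longlongrightarrow> 0) (at 0)" using assms by (simp add: P_def h_def)
  have "((\<lambda>e. a + b*e + e * h e) \<longlongrightarrow> a + b*0 + 0*0) (at 0)"
    by (intro tendsto_intros h)
  moreover have "eventually (\<lambda>e. a + b*e + e * h e = f e) (at 0)"
    using ev_ne0 by eventually_elim (simp add: h_def)
  ultimately show ?thesis by (simp add: tendsto_cong)
qed

lemma P_unique:
  assumes "P f a b" "P f a' b'" shows "a = a' \<and> b = b'"
proof -
  have aa: "a = a'" by (rule tendsto_unique[OF at_neq_bot P_tendsto[OF assms(1)] P_tendsto[OF assms(2)]])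
  have "((\<lambda>e. (f e - a - b*e)/e - (f e - a' - b'*e)/e) \<longlongrightarrow> 0 - 0) (at 0)"
    using assms by (intro tendsto_diff) (simp_all add: P_def)
  moreover have "eventually (\<lambda>e. (f e - a - b*e)/e - (f e - a' - b'*e)/e = b' - b) (at 0)"
    using ev_ne0 by eventually_elim (simp add: aa field_simps)
  ultimately have "((\<lambda>e. b' - b) \<longlongrightarrow> 0) (at (0::real))" by (simp add: tendsto_cong)
  then have "b' - b = 0" by (simp add: tendsto_const_iff)
  with aa show ?thesis by simp
qed

lemma P_cong:
  assumes "P f a b" "eventually (\<lambda>e. f e = g e) (at 0)" shows "P g a b"
proof -
  have "eventually (\<lambda>e. (f e - a - b*e)/e = (g e - a - b*e)/e) (at 0)"
    using assms(2) by eventually_elim simp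
  with assms(1) show ?thesis unfolding P_def by (simp add: tendsto_cong)
qed

lemma P_const: "P (\<lambda>_. c) c 0" by (simp add: P_def)

lemma P_id: "P (\<lambda>e. e) 0 1" by (simp add: P_def)

lemma P_add: assumes "P f a b" "P g c d" shows "P (\<lambda>e. f e + g e) (a + c) (b + d)"
proof -
  have "((\<lambda>e. (f e - a - b*e)/e + (g e - c - d*e)/e) \<longlongrightarrow> 0 + 0) (at 0)"
    using assms by (intro tendsto_add) (simp_all add: P_def)
  moreover have "eventually (\<lambda>e. (f e - a - b*e)/e + (g e - c - d*e)/e = (f e + g e - (a+c) - (b+d)*e)/e) (at 0)"
    using ev_ne0 by eventually_elim (simp add: field_simps)
  ultimately show ?thesis unfolding P_def by (simp add: tendsto_cong)
qed

lemma P_mult: assumes "P f a b" "P g c d" shows "P (\<lambda>e. f e * g e) (a * c) (a * d + b * c)"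
proof -
  define h1 where "h1 e = (f e - a - b*e)/e" for e
  define h2 where "h2 e = (g e - c - d*e)/e" for e
  have "((\<lambda>e. h1 e * g e + (a + b*e) * h2 e + b*d*e) \<longlongrightarrow> 0 * c + (a + b*0) * 0 + b*d*0) (at 0)"
    using assms P_tendsto[OF assms(2)] unfolding P_def h1_def h2_def
    by (intro tendsto_intros) (auto intro: tendsto_ident_at)
  moreover have "eventually (\<lambda>e. h1 e * g e + (a + b*e) * h2 e + b*d*e = (f e * g e - a*c - (a*d+b*c)*e)/e) (at 0)"
    using ev_ne0 by eventually_elim (simp add: h1_def h2_def field_simps)
  ultimately show ?thesis unfolding P_def by (simp add: tendsto_cong)
qed

lemma P_sum: assumes "\<And>i. i \<in> I \<Longrightarrow> P (f i) (a i) (b i)"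
  shows "P (\<lambda>e. \<Sum>i\<in>I. f i e) (\<Sum>i\<in>I. a i) (\<Sum>i\<in>I. b i)"
  using assms
proof (induction I rule: infinite_finite_induct)
  case (infinite A) then show ?case by (simp add: P_const)
next
  case empty then show ?case by (simp add: P_const)
next
  case (insert x F)
  then show ?case by (simp add: P_add)
qed

lemma P_escale: assumes "P f a b" shows "P (\<lambda>e. e * f e) 0 a"
proof -
  have "((\<lambda>e. f e - a) \<longlongrightarrow> a - a) (at 0)" using P_tendsto[OF assms] by (intro tendsto_intros)
  moreover have "eventually (\<lambda>e. f e - a = (e * f e - 0 - a*e)/e) (at 0)"
    using ev_ne0 by eventually_elim (simp add: field_simps)
  ultimately show ?thesis unfolding P_def by (simp add: tendsto_cong)
qed

lemma P_of_bigo: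
  fixes R :: "real \<Rightarrow> real"
  assumes "(\<lambda>e. R e - e^v * (A + B*e)) \<in> O[at 0](\<lambda>e. e^(v+2))"
  shows "P (\<lambda>e. R e / e^v) A B"
proof -
  from assms obtain C where C: "C > 0" and ev: "eventually (\<lambda>e. norm (R e - e^v * (A + B*e)) \<le> C * norm (e^(v+2))) (at 0)"
    by (elim landau_o.bigE)
  have ev2: "eventually (\<lambda>e. norm ((R e / e^v - A - B*e)/e) \<le> C * \<bar>e\<bar>) (at 0)"
    using ev ev_ne0
  proof eventually_elim
    case (elim e)
    have ev0: "e^v \<noteq> 0" using elim(2) by simp
    have "R e / e^v - A - B*e = (R e - e^v * (A + B*e)) / e^v"
      using ev0 by (simp add: diff_divide_distrib)
    then have "(R e / e^v - A - B*e)/e = (R e - e^v * (A + B*e)) / e^(v+1)"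
      by simp
    then have "norm ((R e / e^v - A - B*e)/e) = norm (R e - e^v * (A + B*e)) / \<bar>e\<bar>^(v+1)"
      by (simp add: power_abs abs_mult)
    also have "\<dots> \<le> C * norm (e^(v+2)) / \<bar>e\<bar>^(v+1)"
      using elim by (intro divide_right_mono) auto
    also have "C * norm (e^(v+2)) / \<bar>e\<bar>^(v+1) = C * \<bar>e\<bar>"
    proof -
      have "norm (e^(v+2)) = \<bar>e\<bar>^(v+1) * \<bar>e\<bar>" by (simp add: power_abs abs_mult algebra_simps)
      then show ?thesis using elim(2) by simp
    qed
    finally show ?case .
  qed
  have lim: "((\<lambda>e. C * \<bar>e\<bar>) \<longlongrightarrow> 0) (at (0::real))"
    using tendsto_mult_left[OF tendsto_rabs[OF tendsto_ident_at], of C 0 UNIV] by simp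
  show ?thesis unfolding P_def by (rule Lim_null_comparison[OF ev2 lim])
qed



definition gg :: "nat \<Rightarrow> real \<Rightarrow> real" where "gg k e = Rbar k e / e^(k div 2 + 1)"
definition AA :: "(nat \<Rightarrow> real) \<Rightarrow> (nat \<Rightarrow> real) \<Rightarrow> nat \<Rightarrow> real" where
  "AA a c i = (if odd i then a (i div 2) else c (i div 2))"
definition DD :: "nat \<Rightarrow> real \<Rightarrow> real" where "DD k e = (-1)^k*(1+e)^k + (1+e)"

lemma P_gg:
  fixes a b c d :: "nat \<Rightarrow> real"
  assumes odd_exp: "\<And>m. (\<lambda>e. Rbar (2*m+1) e - e^(m+1) * (a m + b m * e))
                         \<in> O[at 0](\<lambda>e. e^(m+3))"
      and even_exp: "\<And>n. n \<ge> 1 \<Longrightarrow> (\<lambda>e. Rbar (2*n) e - e^(n+1) * (c n + d n * e))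
                         \<in> O[at 0](\<lambda>e. e^(n+3))"
      and i: "i \<ge> 1"
  shows "P (gg i) (AA a c i) (AA b d i)"
proof (cases "odd i")
  case True
  then obtain m where m: "i = 2*m+1" by (metis oddE)
  have eq: "(m+1)+2 = m+3" by simp
  have "(\<lambda>e. Rbar (2*m+1) e - e^(m+1) * (a m + b m * e)) \<in> O[at 0](\<lambda>e. e^((m+1)+2))"
    using odd_exp[of m] unfolding eq .
  from P_of_bigo[OF this] show ?thesis
    unfolding gg_def AA_def m by (simp add: fun_eq_iff)
next
  case False
  then obtain n where n: "i = 2*n" by (metis evenE)
  with i have "n \<ge> 1" by simp
  have eq: "(n+1)+2 = n+3" by simp
  have "(\<lambda>e. Rbar (2*n) e - e^(n+1) * (c n + d n * e)) \<in> O[at 0](\<lambda>e. e^((n+1)+2))"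
    using even_exp[OF \<open>n \<ge> 1\<close>] unfolding eq .
  from P_of_bigo[OF this] show ?thesis
    unfolding gg_def AA_def n by (simp add: fun_eq_iff)
qed

lemma Rbar_rec:
  assumes "k \<ge> 2" "DD k e \<noteq> 0"
  shows "Rbar k e * DD k e = -(3+e) * (\<Sum>j\<in>{1..k-1}. Rbar j e * Rbar (k-j) e)"
proof -
  obtain k' where k: "k = Suc (Suc k')" using assms(1) by (metis add_2_eq_Suc le_Suc_ex)
  show ?thesis using assms(2) unfolding k DD_def by simp
qed

lemma ev_small: "eventually (\<lambda>e::real. e \<noteq> 0 \<and> \<bar>e\<bar> < 1) (at 0)"
proof -
  have "eventually (\<lambda>e::real. \<bar>e\<bar> < 1) (at 0)"
    using eventually_at[of "\<lambda>e::real. \<bar>e\<bar> < 1" 0 UNIV] by (auto intro!: exI[of _ 1])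
  then show ?thesis using ev_ne0 by eventually_elim simp
qed

definition Dt :: "nat \<Rightarrow> real \<Rightarrow> real" where "Dt m e = -(1+e) * (\<Sum>i<2*m. (1+e)^i)"

lemma DD_odd: "DD (2*m+1) e = e * Dt m e"
proof -
  have h: "1 - (1+e)^(2*m) = (1 - (1+e)) * (\<Sum>i<2*m. (1+e)^i)" by (rule one_diff_power_eq)
  have "DD (2*m+1) e = (1+e) * (1 - (1+e)^(2*m))" by (simp add: DD_def algebra_simps)
  also have "\<dots> = e * Dt m e" unfolding h Dt_def by (simp add: algebra_simps)
  finally show ?thesis .
qed

lemma DD_nonzero:
  assumes "k \<ge> 2" "e \<noteq> 0" "\<bar>e\<bar> < 1"
  shows "DD k e \<noteq> 0"
proof (cases "even k")
  case True
  have "(1+e)^k > 0" "1 + e > 0" using assms by auto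
  then have "(1+e)^k + (1+e) > 0" by (rule add_pos_pos)
  then show ?thesis using True unfolding DD_def by simp
next
  case False
  then obtain m where m: "k = 2*m+1" by (metis oddE)
  with assms have "m \<ge> 1" by simp
  have "(\<Sum>i<2*m. (1+e)^i) > 0"
    using assms \<open>m \<ge> 1\<close> by (intro sum_pos) (auto simp: lessThan_empty_iff)
  moreover have "1 + e > 0" using assms by auto
  ultimately have "Dt m e \<noteq> 0" unfolding Dt_def by simp
  then show ?thesis unfolding m DD_odd using assms by simp
qed

lemma rec_odd:
  assumes "m \<ge> 1"
  shows "eventually (\<lambda>e. gg (2*m+1) e * Dt m e = -(3+e) * (\<Sum>j\<in>{1..2*m}. gg j e * gg (2*m+1-j) e)) (at 0)"
  using ev_small
proof eventually_elim
  case (elim e)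
  let ?k = "2*m+1"
  have D: "DD ?k e \<noteq> 0" using DD_nonzero[of ?k e] elim assms by simp
  have R: "Rbar i e = gg i e * e^(i div 2 + 1)" for i using elim by (simp add: gg_def)
  have "(\<Sum>j\<in>{1..?k-1}. Rbar j e * Rbar (?k-j) e) = (\<Sum>j\<in>{1..2*m}. e^(m+2) * (gg j e * gg (?k-j) e))"
  proof (rule sum.cong)
    fix j assume j: "j \<in> {1..2*m}"
    have ex: "j div 2 + 1 + ((?k - j) div 2 + 1) = m + 2" using j by (simp; presburger)
    have "Rbar j e * Rbar (?k-j) e = (gg j e * gg (?k-j) e) * e^(j div 2 + 1 + ((?k - j) div 2 + 1))"
      unfolding R power_add by (simp only: mult_ac)
    then show "Rbar j e * Rbar (?k-j) e = e^(m+2) * (gg j e * gg (?k-j) e)"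
      unfolding ex by (simp only: mult_ac)
  qed simp
  then have "Rbar ?k e * DD ?k e = -(3+e) * (e^(m+2) * (\<Sum>j\<in>{1..2*m}. gg j e * gg (?k-j) e))"
    using Rbar_rec[of ?k e] D assms by (simp add: sum_distrib_left)
  then have "e^(m+2) * (gg ?k e * Dt m e) = e^(m+2) * (-(3+e) * (\<Sum>j\<in>{1..2*m}. gg j e * gg (?k-j) e))"
    unfolding R[of ?k] DD_odd by (simp add: algebra_simps)
  then show ?case using elim by simp
qed

lemma rec_even:
  assumes "n \<ge> 1"
  shows "eventually (\<lambda>e. gg (2*n) e * DD (2*n) e = -(3+e) * (\<Sum>j\<in>{1..2*n-1}. (if odd j then 1 else e) * (gg j e * gg (2*n-j) e))) (at 0)"
  using ev_small
proof eventually_elim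
  case (elim e)
  let ?k = "2*n"
  have D: "DD ?k e \<noteq> 0" using DD_nonzero[of ?k e] elim assms by simp
  have R: "Rbar i e = gg i e * e^(i div 2 + 1)" for i using elim by (simp add: gg_def)
  have "(\<Sum>j\<in>{1..?k-1}. Rbar j e * Rbar (?k-j) e) = (\<Sum>j\<in>{1..2*n-1}. e^(n+1) * ((if odd j then 1 else e) * (gg j e * gg (?k-j) e)))"
  proof (rule sum.cong)
    fix j assume j: "j \<in> {1..2*n-1}"
    show "Rbar j e * Rbar (?k-j) e = e^(n+1) * ((if odd j then 1 else e) * (gg j e * gg (?k-j) e))"
    proof (cases "odd j")
      case True
      then have ex: "j div 2 + 1 + ((?k - j) div 2 + 1) = n + 1" using j by (simp; presburger)
      have "Rbar j e * Rbar (?k-j) e = (gg j e * gg (?k-j) e) * e^(j div 2 + 1 + ((?k - j) div 2 + 1))"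
        unfolding R power_add by (simp only: mult_ac)
      then show ?thesis using True unfolding ex by simp
    next
      case False
      then have ex: "j div 2 + 1 + ((?k - j) div 2 + 1) = Suc (n + 1)" using j by (simp; presburger)
      have "Rbar j e * Rbar (?k-j) e = (gg j e * gg (?k-j) e) * e^(j div 2 + 1 + ((?k - j) div 2 + 1))"
        unfolding R power_add by (simp only: mult_ac)
      then show ?thesis using False unfolding ex by (simp add: mult_ac)
    qed
  qed simp
  then have "Rbar ?k e * DD ?k e = -(3+e) * (e^(n+1) * (\<Sum>j\<in>{1..2*n-1}. (if odd j then 1 else e) * (gg j e * gg (?k-j) e)))"
    using Rbar_rec[of ?k e] D assms by (simp add: sum_distrib_left)
  then have "e^(n+1) * (gg ?k e * DD ?k e) = e^(n+1) * (-(3+e) * (\<Sum>j\<in>{1..2*n-1}. (if odd j then 1 else e) * (gg j e * gg (?k-j) e)))"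
    unfolding R[of ?k] by (simp add: algebra_simps)
  then show ?case using elim by simp
qed


lemma P_eq: "P f a b \<Longrightarrow> f = f' \<Longrightarrow> a = a' \<Longrightarrow> b = b' \<Longrightarrow> P f' a' b'" by simp

lemma P_1e: "P (\<lambda>e. 1 + e) 1 1"
  using P_add[OF P_const[of 1] P_id] by simp

lemma P_pow1: "P (\<lambda>e. (1+e)^i) 1 (real i)"
proof (induction i)
  case 0 then show ?case using P_const[of 1] by simp
next
  case (Suc i)
  from P_mult[OF P_1e Suc] show ?case by (rule P_eq) (auto simp: algebra_simps)
qed

lemma sum_real_lt: "(\<Sum>i<n. real i) = real n * (real n - 1) / 2"
  by (induction n) (auto simp: field_simps)

lemma P_Dt: "P (Dt m) (- (2*real m)) (- (2*real m) - real m * (2*real m - 1))"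
proof -
  have s: "P (\<lambda>e. \<Sum>i<2*m. (1+e)^i) (\<Sum>i<2*m. 1) (\<Sum>i<2*m. real i)"
    by (rule P_sum) (rule P_pow1)
  have n: "P (\<lambda>e. - (1+e)) (-1) (-1)"
    using P_mult[OF P_const[of "-1"] P_1e] by (rule P_eq) auto
  from P_mult[OF n s] show ?thesis
    by (rule P_eq) (auto simp: Dt_def sum_real_lt field_simps fun_eq_iff)
qed

lemma odd_rel:
  fixes a b c d :: "nat \<Rightarrow> real"
  assumes odd_exp: "\<And>m. (\<lambda>e. Rbar (2*m+1) e - e^(m+1) * (a m + b m * e))
                         \<in> O[at 0](\<lambda>e. e^(m+3))"
      and even_exp: "\<And>n. n \<ge> 1 \<Longrightarrow> (\<lambda>e. Rbar (2*n) e - e^(n+1) * (c n + d n * e))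
                         \<in> O[at 0](\<lambda>e. e^(n+3))"
      and m: "m \<ge> 1"
  shows "- (2*real m) * a m = -3 * (\<Sum>j\<in>{1..2*m}. AA a c j * AA a c (2*m+1-j))
     \<and> a m * (- (2*real m) - real m * (2*real m - 1)) + b m * (- (2*real m))
        = -3 * (\<Sum>j\<in>{1..2*m}. AA a c j * AA b d (2*m+1-j) + AA b d j * AA a c (2*m+1-j))
          + (-1) * (\<Sum>j\<in>{1..2*m}. AA a c j * AA a c (2*m+1-j))"
proof -
  note Pg = P_gg[OF odd_exp even_exp]
  have L: "P (\<lambda>e. gg (2*m+1) e * Dt m e) (a m * (- (2*real m))) (a m * (- (2*real m) - real m * (2*real m - 1)) + b m * (- (2*real m)))"
    using P_mult[OF Pg[of "2*m+1"] P_Dt[of m]] by (simp add: AA_def)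
  have n3: "P (\<lambda>e. -(3+e)) (-3) (-1)"
    using P_mult[OF P_const[of "-1"] P_add[OF P_const[of 3] P_id]] by (rule P_eq) auto
  have S: "P (\<lambda>e. \<Sum>j\<in>{1..2*m}. gg j e * gg (2*m+1-j) e)
      (\<Sum>j\<in>{1..2*m}. AA a c j * AA a c (2*m+1-j))
      (\<Sum>j\<in>{1..2*m}. AA a c j * AA b d (2*m+1-j) + AA b d j * AA a c (2*m+1-j))"
    by (rule P_sum, rule P_mult) (auto intro: Pg)
  have R: "P (\<lambda>e. -(3+e) * (\<Sum>j\<in>{1..2*m}. gg j e * gg (2*m+1-j) e))
      (-3 * (\<Sum>j\<in>{1..2*m}. AA a c j * AA a c (2*m+1-j)))
      (-3 * (\<Sum>j\<in>{1..2*m}. AA a c j * AA b d (2*m+1-j) + AA b d j * AA a c (2*m+1-j))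
          + (-1) * (\<Sum>j\<in>{1..2*m}. AA a c j * AA a c (2*m+1-j)))"
    using P_mult[OF n3 S] .
  have L': "P (\<lambda>e. -(3+e) * (\<Sum>j\<in>{1..2*m}. gg j e * gg (2*m+1-j) e)) (a m * (- (2*real m))) (a m * (- (2*real m) - real m * (2*real m - 1)) + b m * (- (2*real m)))"
    using P_cong[OF L rec_odd[OF m]] .
  from P_unique[OF L' R] show ?thesis by (simp add: mult.commute)
qed

lemma P_w: assumes "P X A B"
  shows "P (\<lambda>e. (if odd j then 1 else e) * X e) (if odd j then A else 0) (if odd j then B else A)"
proof (cases "odd j")
  case True then show ?thesis using assms by simp
next
  case False then show ?thesis using P_escale[OF assms] by simp
qed

lemma even_rel:
  fixes a b c d :: "nat \<Rightarrow> real"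
  assumes odd_exp: "\<And>m. (\<lambda>e. Rbar (2*m+1) e - e^(m+1) * (a m + b m * e))
                         \<in> O[at 0](\<lambda>e. e^(m+3))"
      and even_exp: "\<And>n. n \<ge> 1 \<Longrightarrow> (\<lambda>e. Rbar (2*n) e - e^(n+1) * (c n + d n * e))
                         \<in> O[at 0](\<lambda>e. e^(n+3))"
      and n: "n \<ge> 1"
  shows "c n * 2 = -3 * (\<Sum>j\<in>{1..2*n-1}. if odd j then AA a c j * AA a c (2*n-j) else 0)
     \<and> c n * (2*real n + 1) + d n * 2
        = -3 * (\<Sum>j\<in>{1..2*n-1}. if odd j then AA a c j * AA b d (2*n-j) + AA b d j * AA a c (2*n-j) else AA a c j * AA a c (2*n-j))
          + (-1) * (\<Sum>j\<in>{1..2*n-1}. if odd j then AA a c j * AA a c (2*n-j) else 0)"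
proof -
  note Pg = P_gg[OF odd_exp even_exp]
  have PD: "P (DD (2*n)) 2 (2*real n + 1)"
    using P_add[OF P_pow1[of "2*n"] P_1e] by (rule P_eq) (auto simp: DD_def fun_eq_iff)
  have L: "P (\<lambda>e. gg (2*n) e * DD (2*n) e) (c n * 2) (c n * (2*real n + 1) + d n * 2)"
    using P_mult[OF Pg[of "2*n"] PD] n by (simp add: AA_def)
  have n3: "P (\<lambda>e. -(3+e)) (-3) (-1)"
    using P_mult[OF P_const[of "-1"] P_add[OF P_const[of 3] P_id]] by (rule P_eq) auto
  have S: "P (\<lambda>e. \<Sum>j\<in>{1..2*n-1}. (if odd j then 1 else e) * (gg j e * gg (2*n-j) e))
      (\<Sum>j\<in>{1..2*n-1}. if odd j then AA a c j * AA a c (2*n-j) else 0)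
      (\<Sum>j\<in>{1..2*n-1}. if odd j then AA a c j * AA b d (2*n-j) + AA b d j * AA a c (2*n-j) else AA a c j * AA a c (2*n-j))"
    by (rule P_sum, rule P_w, rule P_mult) (auto intro: Pg)
  note R = P_mult[OF n3 S]
  have L': "P (\<lambda>e. -(3+e) * (\<Sum>j\<in>{1..2*n-1}. (if odd j then 1 else e) * (gg j e * gg (2*n-j) e))) (c n * 2) (c n * (2*real n + 1) + d n * 2)"
    using P_cong[OF L rec_even[OF n]] .
  from P_unique[OF L' R] show ?thesis by simp
qed


unbundle no vec_syntax
unbundle fps_syntax

definition zz :: "(nat \<Rightarrow> real) \<Rightarrow> nat \<Rightarrow> real" where "zz y n = (if n = 0 then 0 else y n)"

lemma sum_split_odd: fixes m :: nat and f :: "nat \<Rightarrow> real" shows "(\<Sum>j\<in>{1..2*m}. f j) = (\<Sum>p<m. f (2*p+1)) + (\<Sum>q\<in>{1..m}. f (2*q))"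
proof (induction m)
  case 0 then show ?case by simp
next
  case (Suc m)
  have "(\<Sum>j\<in>{1..2*Suc m}. f j) = (\<Sum>j\<in>{1..2*m}. f j) + f (2*m+1) + f (2*m+2)"
    by (simp add: sum.cl_ivl_Suc)
  also have "\<dots> = (\<Sum>p<Suc m. f (2*p+1)) + (\<Sum>q\<in>{1..Suc m}. f (2*q))"
    using Suc by (simp add: sum.cl_ivl_Suc)
  finally show ?case .
qed

lemma sum_split_even: fixes n :: nat and f :: "nat \<Rightarrow> real" assumes "n \<ge> 1"
  shows "(\<Sum>j\<in>{1..2*n-1}. f j) = (\<Sum>p<n. f (2*p+1)) + (\<Sum>q\<in>{1..n-1}. f (2*q))"
proof -
  obtain m where n: "n = Suc m" using assms by (cases n) auto
  have "(\<Sum>j\<in>{1..2*n-1}. f j) = (\<Sum>j\<in>{1..2*m}. f j) + f (2*m+1)"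
    unfolding n by (simp add: sum.cl_ivl_Suc)
  then show ?thesis unfolding sum_split_odd n by simp
qed

lemma conv1: "(Abs_fps x * Abs_fps (zz y)) $ m = (\<Sum>p<m. x p * y (m-p))"
proof -
  have "(Abs_fps x * Abs_fps (zz y)) $ m = (\<Sum>i<Suc m. x i * zz y (m-i))"
    by (simp add: fps_mult_nth atLeast0AtMost lessThan_Suc_atMost)
  also have "\<dots> = (\<Sum>p<m. x p * y (m-p))"
    by (simp add: zz_def)
  finally show ?thesis .
qed

lemma conv2: "(Abs_fps (zz y) * Abs_fps x) $ m = (\<Sum>q\<in>{1..m}. y q * x (m-q))"
proof -
  have "(Abs_fps (zz y) * Abs_fps x) $ m = (\<Sum>i=0..m. zz y i * x (m-i))"
    by (simp add: fps_mult_nth)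
  also have "\<dots> = zz y 0 * x m + (\<Sum>i=Suc 0..m. zz y i * x (m-i))"
    by (simp add: sum.atLeast_Suc_atMost)
  also have "\<dots> = (\<Sum>q\<in>{1..m}. y q * x (m-q))"
    by (simp add: zz_def)
  finally show ?thesis .
qed

lemma conv3: assumes "n \<ge> 1" shows "(Abs_fps x * Abs_fps y) $ (n-1) = (\<Sum>p<n. x p * y (n-1-p))"
  using assms by (simp add: fps_mult_nth atLeast0AtMost lessThan_Suc_atMost[symmetric])

lemma conv4: "(Abs_fps (zz y) * Abs_fps (zz z)) $ n = (\<Sum>q\<in>{1..n-1}. y q * z (n-q))"
proof (cases n)
  case 0 then show ?thesis by (simp add: fps_mult_nth zz_def)
next
  case (Suc m)
  have "(Abs_fps (zz y) * Abs_fps (zz z)) $ n = (\<Sum>q\<in>{1..n}. y q * zz z (n-q))"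
    using conv2[of y "zz z" n] .
  also have "\<dots> = (\<Sum>q\<in>{1..m}. y q * zz z (n-q)) + y n * zz z 0"
    using Suc by (simp add: sum.cl_ivl_Suc)
  also have "\<dots> = (\<Sum>q\<in>{1..n-1}. y q * z (n-q))"
    using Suc by (auto simp: zz_def intro!: sum.cong)
  finally show ?thesis .
qed

lemma AA_odd: "AA a c (2*p+1) = a p" by (simp add: AA_def)
lemma AA_even: "AA a c (2*p) = c p" by (simp add: AA_def)
lemma AA_odd': "AA a c (Suc (2*p)) = a p" by (simp add: AA_def)


lemma sum_odd_H: fixes H :: "nat \<Rightarrow> nat \<Rightarrow> real"
  shows "(\<Sum>j\<in>{1..2*m}. H j (2*m+1-j)) = (\<Sum>p<m. H (2*p+1) (2*(m-p))) + (\<Sum>q\<in>{1..m}. H (2*q) (2*(m-q)+1))"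
proof -
  have "(\<Sum>j\<in>{1..2*m}. H j (2*m+1-j)) = (\<Sum>p<m. H (2*p+1) (2*m+1-(2*p+1))) + (\<Sum>q\<in>{1..m}. H (2*q) (2*m+1-2*q))"
    by (rule sum_split_odd)
  also have "(\<Sum>p<m. H (2*p+1) (2*m+1-(2*p+1))) = (\<Sum>p<m. H (2*p+1) (2*(m-p)))"
    by (rule sum.cong) (auto simp: right_diff_distrib')
  also have "(\<Sum>q\<in>{1..m}. H (2*q) (2*m+1-2*q)) = (\<Sum>q\<in>{1..m}. H (2*q) (2*(m-q)+1))"
    by (rule sum.cong) (auto simp: right_diff_distrib' Suc_diff_le)
  finally show ?thesis .
qed

lemma sum_even_H: fixes H :: "nat \<Rightarrow> nat \<Rightarrow> real" assumes "n \<ge> 1"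
  shows "(\<Sum>j\<in>{1..2*n-1}. H j (2*n-j)) = (\<Sum>p<n. H (2*p+1) (2*(n-1-p)+1)) + (\<Sum>q\<in>{1..n-1}. H (2*q) (2*(n-q)))"
proof -
  have "(\<Sum>j\<in>{1..2*n-1}. H j (2*n-j)) = (\<Sum>p<n. H (2*p+1) (2*n-(2*p+1))) + (\<Sum>q\<in>{1..n-1}. H (2*q) (2*n-2*q))"
    by (rule sum_split_even[OF assms])
  also have "(\<Sum>p<n. H (2*p+1) (2*n-(2*p+1))) = (\<Sum>p<n. H (2*p+1) (2*(n-1-p)+1))"
  proof (rule sum.cong)
    fix p assume "p \<in> {..<n}"
    then have "2*n-(2*p+1) = 2*(n-1-p)+1" by simp
    then show "H (2*p+1) (2*n-(2*p+1)) = H (2*p+1) (2*(n-1-p)+1)" by simp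
  qed simp
  also have "(\<Sum>q\<in>{1..n-1}. H (2*q) (2*n-2*q)) = (\<Sum>q\<in>{1..n-1}. H (2*q) (2*(n-q)))"
    by (rule sum.cong) (auto simp: right_diff_distrib')
  finally show ?thesis .
qed


lemma nummult [simp]: "((numeral k :: real fps) * f) $ n = numeral k * f $ n"
  by (simp add: fps_numeral_fps_const)
lemma negnummult [simp]: "((- numeral k :: real fps) * f) $ n = - numeral k * f $ n"
  by (simp add: fps_numeral_fps_const)
lemma Xd: "(fps_X * fps_deriv (f :: real fps)) $ n = of_nat n * f $ n"
  by (cases n) simp_all

lemma partA:
  fixes a b c d :: "nat \<Rightarrow> real"
  assumes odd_exp: "\<And>m. (\<lambda>e. Rbar (2*m+1) e - e^(m+1) * (a m + b m * e))
                         \<in> O[at 0](\<lambda>e. e^(m+3))"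
      and even_exp: "\<And>n. n \<ge> 1 \<Longrightarrow> (\<lambda>e. Rbar (2*n) e - e^(n+1) * (c n + d n * e))
                         \<in> O[at 0](\<lambda>e. e^(n+3))"
  defines "\<alpha> \<equiv> Abs_fps a" and "\<beta> \<equiv> Abs_fps b" and "\<gamma> \<equiv> Abs_fps (zz c)" and "\<delta> \<equiv> Abs_fps (zz d)"
  shows "a 0 = 1" "b 0 = 0"
    "fps_X * fps_deriv \<alpha> = 3 * (\<alpha> * \<gamma>)"
    "2 * (fps_X * fps_deriv \<beta>) = 6 * (\<alpha> * \<delta>) + 6 * (\<beta> * \<gamma>) - 6 * (fps_X * fps_deriv (\<alpha> * \<gamma>)) - \<alpha> * \<gamma>"
    "2 * \<gamma> = -3 * (fps_X * (\<alpha> * \<alpha>))"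
    "2 * \<delta> = -6 * (fps_X * (\<alpha> * \<beta>)) - 3 * (\<gamma> * \<gamma>) - fps_X * (\<alpha> * \<alpha>) - 2 * (fps_X * fps_deriv \<gamma>) - \<gamma>"
proof -
  note Pg = P_gg[OF odd_exp even_exp]
  have P1: "P (gg 1) 1 0"
  proof (rule P_cong[OF P_const])
    show "eventually (\<lambda>e. 1 = gg 1 e) (at 0)" using ev_ne0 by eventually_elim (simp add: gg_def)
  qed
  from P_unique[OF Pg[of 1] P1] show a0: "a 0 = 1" and b0: "b 0 = 0" by (simp_all add: AA_def)
  have g0: "\<gamma> $ 0 = 0" "\<delta> $ 0 = 0" by (simp_all add: \<gamma>_def \<delta>_def zz_def)
  have S1: "(\<Sum>j\<in>{1..2*m}. AA a c j * AA a c (2*m+1-j)) = (\<alpha>*\<gamma>)$m + (\<gamma>*\<alpha>)$m" for m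
    using sum_odd_H[of "\<lambda>j l. AA a c j * AA a c l" m] conv1[of a c m] conv2[of c a m]
    by (simp add: AA_odd AA_odd' AA_even \<alpha>_def \<gamma>_def)
  have S2: "(\<Sum>j\<in>{1..2*m}. AA a c j * AA b d (2*m+1-j) + AA b d j * AA a c (2*m+1-j))
      = (\<alpha>*\<delta>)$m + (\<beta>*\<gamma>)$m + (\<gamma>*\<beta>)$m + (\<delta>*\<alpha>)$m" for m
    using sum_odd_H[of "\<lambda>j l. AA a c j * AA b d l + AA b d j * AA a c l" m]
      conv1[of a d m] conv1[of b c m] conv2[of c b m] conv2[of d a m]
    by (simp add: AA_odd AA_odd' AA_even \<alpha>_def \<beta>_def \<gamma>_def \<delta>_def sum.distrib)
  have O: "real m * a m = 3 * (\<alpha>*\<gamma>)$m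
      \<and> a m * (- (2*real m) - real m * (2*real m - 1)) + b m * (- (2*real m))
        = -6 * ((\<alpha>*\<delta>)$m + (\<beta>*\<gamma>)$m) - 2 * (\<alpha>*\<gamma>)$m" if m: "m \<ge> 1" for m
    using odd_rel[OF odd_exp even_exp m] unfolding S1 S2
    by (simp add: mult.commute[of \<gamma>] mult.commute[of \<gamma> \<beta>] mult.commute[of \<delta>]; auto simp: algebra_simps)
  have T1: "(\<Sum>j\<in>{1..2*n-1}. if odd j then AA a c j * AA a c (2*n-j) else 0) = (\<alpha>*\<alpha>)$(n-1)" if n: "n \<ge> 1" for n
    using sum_even_H[OF n, of "\<lambda>j l. if odd j then AA a c j * AA a c l else 0"] conv3[OF n, of a a]
    by (simp add: AA_odd AA_odd' AA_even \<alpha>_def)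
  have T2: "(\<Sum>j\<in>{1..2*n-1}. if odd j then AA a c j * AA b d (2*n-j) + AA b d j * AA a c (2*n-j) else AA a c j * AA a c (2*n-j))
      = (\<alpha>*\<beta>)$(n-1) + (\<beta>*\<alpha>)$(n-1) + (\<gamma>*\<gamma>)$n" if n: "n \<ge> 1" for n
    using sum_even_H[OF n, of "\<lambda>j l. if odd j then AA a c j * AA b d l + AA b d j * AA a c l else AA a c j * AA a c l"]
      conv3[OF n, of a b] conv3[OF n, of b a] conv4[of c c n]
    by (simp add: AA_odd AA_odd' AA_even \<alpha>_def \<beta>_def \<gamma>_def sum.distrib)
  have E: "c n * 2 = -3 * (\<alpha>*\<alpha>)$(n-1)
     \<and> c n * (2*real n + 1) + d n * 2 = -6 * (\<alpha>*\<beta>)$(n-1) - 3 * (\<gamma>*\<gamma>)$n - (\<alpha>*\<alpha>)$(n-1)" if n: "n \<ge> 1" for n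
    using even_rel[OF odd_exp even_exp n] unfolding T1[OF n] T2[OF n]
    by (simp add: mult.commute[of \<beta>]; auto simp: algebra_simps)
  show "fps_X * fps_deriv \<alpha> = 3 * (\<alpha> * \<gamma>)"
  proof (rule fps_ext)
    fix n show "(fps_X * fps_deriv \<alpha>) $ n = (3 * (\<alpha> * \<gamma>)) $ n"
    proof (cases "n = 0")
      case True then show ?thesis using g0 by (simp add: fps_mult_nth)
    next
      case False then show ?thesis using O[of n] by (simp add: Xd \<alpha>_def)
    qed
  qed
  show "2 * \<gamma> = -3 * (fps_X * (\<alpha> * \<alpha>))"
  proof (rule fps_ext)
    fix n show "(2 * \<gamma>) $ n = (-3 * (fps_X * (\<alpha> * \<alpha>))) $ n"
    proof (cases "n = 0")
      case True then show ?thesis using g0 by simp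
    next
      case False then show ?thesis using E[of n] by (simp add: \<gamma>_def zz_def)
    qed
  qed
  show "2 * \<delta> = -6 * (fps_X * (\<alpha> * \<beta>)) - 3 * (\<gamma> * \<gamma>) - fps_X * (\<alpha> * \<alpha>) - 2 * (fps_X * fps_deriv \<gamma>) - \<gamma>"
  proof (rule fps_ext)
    fix n show "(2 * \<delta>) $ n = (-6 * (fps_X * (\<alpha> * \<beta>)) - 3 * (\<gamma> * \<gamma>) - fps_X * (\<alpha> * \<alpha>) - 2 * (fps_X * fps_deriv \<gamma>) - \<gamma>) $ n"
    proof (cases "n = 0")
      case True then show ?thesis using g0 by (simp add: fps_mult_nth)
    next
      case False
      have gn: "\<gamma> $ n = c n" "\<delta> $ n = d n" using False by (simp_all add: \<gamma>_def \<delta>_def zz_def)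
      have "(-6 * (fps_X * (\<alpha> * \<beta>)) - 3 * (\<gamma> * \<gamma>) - fps_X * (\<alpha> * \<alpha>) - 2 * (fps_X * fps_deriv \<gamma>) - \<gamma>) $ n
         = -6 * (\<alpha>*\<beta>)$(n-1) - 3 * (\<gamma>*\<gamma>)$n - (\<alpha>*\<alpha>)$(n-1) - 2 * (real n * c n) - c n"
      proof -
        have xd: "fps_deriv \<gamma> $ (n-1) = real n * c n" using gn False by simp
        show ?thesis using False by (simp only: fps_sub_nth negnummult nummult xd gn fps_X_mult_nth if_False)
      qed
      moreover have "(2 * \<delta>) $ n = 2 * d n" by (simp only: nummult gn)
      moreover have "c n * (2*real n + 1) = 2*(real n * c n) + c n" by (simp add: algebra_simps)
      moreover have "n \<ge> 1" using False by simp
      ultimately show ?thesis using E[of n] by linarith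
    qed
  qed
  show "2 * (fps_X * fps_deriv \<beta>) = 6 * (\<alpha> * \<delta>) + 6 * (\<beta> * \<gamma>) - 6 * (fps_X * fps_deriv (\<alpha> * \<gamma>)) - \<alpha> * \<gamma>"
  proof (rule fps_ext)
    fix n show "(2 * (fps_X * fps_deriv \<beta>)) $ n = (6 * (\<alpha> * \<delta>) + 6 * (\<beta> * \<gamma>) - 6 * (fps_X * fps_deriv (\<alpha> * \<gamma>)) - \<alpha> * \<gamma>) $ n"
    proof (cases "n = 0")
      case True then show ?thesis using g0 by (simp add: fps_mult_nth)
    next
      case False
      then have n: "n \<ge> 1" by simp
      have h1: "real n * a n = 3 * (\<alpha>*\<gamma>)$n" using O[OF n] by blast
      have h2: "a n * (- (2*real n) - real n * (2*real n - 1)) + b n * (- (2*real n))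
        = -6 * ((\<alpha>*\<delta>)$n + (\<beta>*\<gamma>)$n) - 2 * (\<alpha>*\<gamma>)$n" using O[OF n] by blast
      have h3: "a n * (- (2*real n) - real n * (2*real n - 1)) = -(2*real n+1) * (real n * a n)"
        by (simp add: algebra_simps)
      have "2 * (real n * b n) = 6 * ((\<alpha>*\<delta>)$n + (\<beta>*\<gamma>)$n) - 6 * (real n * (\<alpha>*\<gamma>)$n) - (\<alpha>*\<gamma>)$n"
        using h2 unfolding h3 h1 by (simp add: algebra_simps)
      moreover have A: "(2 * (fps_X * fps_deriv \<beta>)) $ n = 2 * (real n * b n)"
        by (simp only: nummult Xd) (simp add: \<beta>_def)
      moreover have B: "(6 * (\<alpha> * \<delta>) + 6 * (\<beta> * \<gamma>) - 6 * (fps_X * fps_deriv (\<alpha> * \<gamma>)) - \<alpha> * \<gamma>) $ n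
          = 6 * (\<alpha> * \<delta>)$n + 6 * (\<beta> * \<gamma>)$n - 6 * (real n * (\<alpha> * \<gamma>)$n) - (\<alpha> * \<gamma>)$n"
        by (simp only: fps_add_nth fps_sub_nth nummult Xd)
      ultimately show ?thesis unfolding A B by (simp add: algebra_simps)
    qed
  qed
qed



theorem mainTheorem3:
  fixes a b c d :: "nat \<Rightarrow> real" and \<tau> :: real
  assumes odd_exp: "\<And>m. (\<lambda>e. Rbar (2*m+1) e - e^(m+1) * (a m + b m * e))
                         \<in> O[at 0](\<lambda>e. e^(m+3))"
      and even_exp: "\<And>n. n \<ge> 1 \<Longrightarrow> (\<lambda>e. Rbar (2*n) e - e^(n+1) * (c n + d n * e))
                         \<in> O[at 0](\<lambda>e. e^(n+3))"
      and tau: "\<bar>\<tau>\<bar> < 1/3"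
  shows "(\<lambda>m. b m * \<tau>^(2*m+1)) sums
           (- (\<tau> * (45 * \<tau>^2 - 33 * ln (1 + 9 * \<tau>^2))) / (24 * (1 + 9 * \<tau>^2) powr (3/2)))
       \<and> (\<lambda>n. d (Suc n) * \<tau>^(2 * Suc n)) sums
           (\<tau>^2 * (14 + 36 * \<tau>^2 - 33 * ln (1 + 9 * \<tau>^2)) / (8 * (1 + 9 * \<tau>^2)^2))"
proof -
  note A = partA[OF odd_exp even_exp]
  have zc: "Abs_fps (zz c) = Abs_fps (\<lambda>n. if n = 0 then 0 else c n)"
       "Abs_fps (zz d) = Abs_fps (\<lambda>n. if n = 0 then 0 else d n)"
    by (simp_all add: zz_def[abs_def])
  show ?thesis
  proof (rule final_sums[of a b c d, OF A(1) A(2) _ _ _ _ tau])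
    show "fps_X * fps_deriv (Abs_fps a) = 3 * Abs_fps a * Abs_fps (\<lambda>n. if n = 0 then 0 else c n)"
      using A(3) unfolding zc by (simp add: mult.assoc)
    show "2 * fps_X * fps_deriv (Abs_fps b) =
      6 * (Abs_fps a * Abs_fps (\<lambda>n. if n = 0 then 0 else d n) + Abs_fps b * Abs_fps (\<lambda>n. if n = 0 then 0 else c n)) -
      6 * fps_X * fps_deriv (Abs_fps a * Abs_fps (\<lambda>n. if n = 0 then 0 else c n)) -
      Abs_fps a * Abs_fps (\<lambda>n. if n = 0 then 0 else c n)"
      using A(4) unfolding zc by algebra
    show "2 * Abs_fps (\<lambda>n. if n = 0 then 0 else c n) = - 3 * fps_X * (Abs_fps a)\<^sup>2"
      using A(5) unfolding zc by algebra
    show "2 * Abs_fps (\<lambda>n. if n = 0 then 0 else d n) =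
      - 6 * fps_X * Abs_fps a * Abs_fps b - 3 * (Abs_fps (\<lambda>n. if n = 0 then 0 else c n))\<^sup>2 -
      fps_X * (Abs_fps a)\<^sup>2 - 2 * fps_X * fps_deriv (Abs_fps (\<lambda>n. if n = 0 then 0 else c n)) -
      Abs_fps (\<lambda>n. if n = 0 then 0 else c n)"
      using A(6) unfolding zc by algebra
  qed
qed

end
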